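(* Let $L\ge 2$ and consider the tandem network of $L$ queues on a ring described in the context, in which a client served at queue $i$ moves to queue $i+1 \bmod L$. Fix $\lambda>0$ and, for each $i$, let $\pi_i^\lambda$ be a stationary probability distribution of the isolated queue $i$ fed by a Poisson arrival process of rate $\lambda$. Suppose that for every $i\in\{0,\dots,L-1\}$ and every $z_i\in E_i$ the following partial balance equations hold: $$\sum_{z\in V_i^+(z_i)}\mu(z)\,p_i^-(z,z_i)\,\pi_i^\lambda(z)=\lambda\,\pi_i^\lambda(z_i),$$ $$\mu(z_i)\pi_i^\lambda(z_i)+\sum_{z\in V_i^0(z_i)}q_i^0(z_i,z)\,\pi_i^\lambda(z_i)=\sum_{z\in V_i^-(z_i)}\lambda\,p_i^+(z,z_i)\,\pi_i^\lambda(z)+\sum_{z\in V_i^0(z_i)}q_i^0(z,z_i)\,\pi_i^\lambda(z).$$ Then for every integer $N\ge 0$ such that $Z_N:=\sum_{(z_0,\dots,z_{L-1})\in\Omega_N}\prod_{i}\pi_i^\lambda(z_i)>0$, where $\Omega_N=\{(z_0,\dots,z_{L-1})\in\prod_i E_i:\ \sum_i n(z_i)=N\}$, the probability measure on $\Omega_N$ $$P(z_0,\dots,z_{L-1})=\frac{\prod_{i=0}^{L-1}\pi_i^\lambda(z_i)}{Z_N}$$ (i.e. the product measure $\prod_i\pi_i^\lambda$ conditioned on the total number of clients being $N$) is a stationary distribution of the network dynamics restricted to $\Omega_N$.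
   Context: Queues with stochastic service rates. Each queue $i\in\{0,\dots,L-1\}$ has a countable state space $E_i\subset\mathbb N\times\mathbb R_+$; a state $z=(n,\mu)$ records the number of clients $n=n(z)$ and the current service rate $\mu=\mu(z)$, with $\mu(z)=0$ whenever $n(z)=0$. Write $V_i^+(z)=\{z'\in E_i: n(z')=n(z)+1\}$, $V_i^-(z)=\{z'\in E_i:n(z')=n(z)-1\}$, $V_i^0(z)=\{z'\in E_i: n(z')=n(z)\}$. For each $i$ there are transition probabilities $p_i^+(z,\cdot)$ on $V_i^+(z)$ (for all $z$) and $p_i^-(z,\cdot)$ on $V_i^-(z)$ (for $n(z)\ge1$), each summing to $1$, and nonnegative internal rates $q_i^0(z,z')$, $z'\in V_i^0(z)$. The isolated queue $i$ with arrival rate $\lambda$ is the continuous-time Markov chain on $E_i$ with jump rates $q_i(z,z')=\lambda p_i^+(z,z')\mathbf 1_{z'\in V_i^+(z)}+\mu(z)p_i^-(z,z')\mathbf 1_{z'\in V_i^-(z)}+q_i^0(z,z')\mathbf 1_{z'\in V_i^0(z)}$. The network is the continuous-time Markov chain on $\prod_i E_i$ in which: (a) for each $i$ with $n(z_i)\ge1$, at rate $\mu(z_i)p_i^-(z_i,z')p_{i+1}^+(z_{i+1},z'')$ (indices mod $L$) the state changes by $z_i\to z'\in V_i^-(z_i)$ and simultaneously $z_{i+1}\to z''\in V_{i+1}^+(z_{i+1})$; (b) for each $i$, at rate $q_i^0(z_i,z')$ the state changes by $z_i\to z'\in V_i^0(z_i)$, other coordinates unchanged. Total jump rates out of each state are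 assumed finite. The total number of clients is conserved, so the dynamics preserves each $\Omega_N$. *)

theory Defs
  imports "HOL-Analysis.Analysis"
begin

text \<open>A queue state is a pair (n, mu): number of clients and current service rate.\<close>
type_synonym qstate = "nat \<times> real"

definition Vp :: "qstate set \<Rightarrow> qstate \<Rightarrow> qstate set" where
  "Vp E z = {z' \<in> E. fst z' = fst z + 1}"

definition Vm :: "qstate set \<Rightarrow> qstate \<Rightarrow> qstate set" where
  "Vm E z = {z' \<in> E. fst z' + 1 = fst z}"

definition V0 :: "qstate set \<Rightarrow> qstate \<Rightarrow> qstate set" where
  "V0 E z = {z' \<in> E. fst z' = fst z}"

definition iso_rate ::
  "qstate set \<Rightarrow> (qstate \<Rightarrow> qstate \<Rightarrow> real) \<Rightarrow> (qstate \<Rightarrow> qstate \<Rightarrow> real)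
   \<Rightarrow> (qstate \<Rightarrow> qstate \<Rightarrow> real) \<Rightarrow> real \<Rightarrow> qstate \<Rightarrow> qstate \<Rightarrow> real" where
  "iso_rate E pp pm q0 lam z z' =
     (if z' \<in> Vp E z then lam * pp z z' else 0)
   + (if z' \<in> Vm E z then snd z * pm z z' else 0)
   + (if z' \<in> V0 E z then q0 z z' else 0)"

definition net_rate ::
  "nat \<Rightarrow> (nat \<Rightarrow> qstate set) \<Rightarrow> (nat \<Rightarrow> qstate \<Rightarrow> qstate \<Rightarrow> real)
   \<Rightarrow> (nat \<Rightarrow> qstate \<Rightarrow> qstate \<Rightarrow> real) \<Rightarrow> (nat \<Rightarrow> qstate \<Rightarrow> qstate \<Rightarrow> real)
   \<Rightarrow> (nat \<Rightarrow> qstate) \<Rightarrow> (nat \<Rightarrow> qstate) \<Rightarrow> real" where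
  "net_rate L E pp pm q0 x y =
     (\<Sum>i<L. if 1 \<le> fst (x i)
                \<and> y = x(i := y i, Suc i mod L := y (Suc i mod L))
                \<and> y i \<in> Vm (E i) (x i)
                \<and> y (Suc i mod L) \<in> Vp (E (Suc i mod L)) (x (Suc i mod L))
             then snd (x i) * pm i (x i) (y i)
                  * pp (Suc i mod L) (x (Suc i mod L)) (y (Suc i mod L))
             else 0)
   + (\<Sum>i<L. if y = x(i := y i) \<and> y i \<in> V0 (E i) (x i)
             then q0 i (x i) (y i) else 0)"

definition stationary_dist :: "'s set \<Rightarrow> ('s \<Rightarrow> 's \<Rightarrow> real) \<Rightarrow> ('s \<Rightarrow> real) \<Rightarrow> bool" where
  "stationary_dist S q P \<longleftrightarrow>
     (\<forall>x\<in>S. 0 \<le> P x) \<and> (P has_sum 1) S \<and>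
     (\<forall>x\<in>S. (q x) summable_on (S - {x}) \<and>
        ((\<lambda>y. P y * q y x) has_sum (P x * (\<Sum>\<^sub>\<infinity>y\<in>S - {x}. q x y))) (S - {x}))"

definition Omega :: "nat \<Rightarrow> (nat \<Rightarrow> qstate set) \<Rightarrow> nat \<Rightarrow> (nat \<Rightarrow> qstate) set" where
  "Omega L E N = {x \<in> PiE {..<L} E. (\<Sum>i<L. fst (x i)) = N}"

end

theory Submission
  imports Defs
begin


lemma has_sum_times_nonneg:
  fixes f :: "'a \<Rightarrow> real" and g :: "'b \<Rightarrow> real"
  assumes fa: "(f has_sum a) A" and gb: "(g has_sum b) B"
    and f0: "\<And>u. u \<in> A \<Longrightarrow> f u \<ge> 0" and g0: "\<And>v. v \<in> B \<Longrightarrow> g v \<ge> 0"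
  shows "((\<lambda>(u,v). f u * g v) has_sum (a*b)) (A \<times> B)"
proof -
  have b0: "b \<ge> 0" using has_sum_nonneg[OF gb] g0 by blast
  have inner: "((\<lambda>v. f u * g v) has_sum (f u * b)) B" for u
    using has_sum_cmult_right[OF gb] .
  have outer: "((\<lambda>u. f u * b) has_sum (a * b)) A"
    using has_sum_cmult_left[OF fa] .
  have "(\<lambda>p. norm ((\<lambda>(u,v). f u * g v) p)) summable_on Sigma A (\<lambda>_. B)"
  proof (rule Infinite_Sum.abs_summable_on_Sigma_iff[THEN iffD2], intro conjI ballI)
    fix u assume u: "u \<in> A"
    have "((\<lambda>v. norm (f u * g v)) has_sum (f u * b)) B"
      using inner by (rule has_sum_cong[THEN iffD1, rotated]) (simp add: f0[OF u] g0 abs_mult)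
    then show "(\<lambda>v. norm ((\<lambda>(u,v). f u * g v) (u, v))) summable_on B"
      by (auto dest: has_sum_imp_summable)
  next
    have "((\<lambda>u. norm (\<Sum>\<^sub>\<infinity>v\<in>B. norm ((\<lambda>(u,v). f u * g v) (u, v)))) has_sum (a*b)) A"
    proof (rule has_sum_cong[THEN iffD1, OF _ outer])
      fix u assume u: "u \<in> A"
      have "((\<lambda>v. norm (f u * g v)) has_sum (f u * b)) B"
        using inner by (rule has_sum_cong[THEN iffD1, rotated]) (simp add: f0[OF u] g0 abs_mult)
      then have "(\<Sum>\<^sub>\<infinity>v\<in>B. norm (f u * g v)) = f u * b" by (simp add: infsumI)
      then show "f u * b = norm (\<Sum>\<^sub>\<infinity>v\<in>B. norm ((\<lambda>(u,v). f u * g v) (u, v)))"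
        using f0[OF u] b0 by simp
    qed
    then show "(\<lambda>u. norm (\<Sum>\<^sub>\<infinity>v\<in>B. norm ((\<lambda>(u,v). f u * g v) (u, v)))) summable_on A"
      by (auto dest: has_sum_imp_summable)
  qed
  then have "(\<lambda>(u,v). f u * g v) summable_on Sigma A (\<lambda>_. B)"
    by (rule abs_summable_summable)
  then show ?thesis
    using has_sum_SigmaI[where f="\<lambda>(u,v). f u * g v" and g="\<lambda>u. f u * b" and A=A and B="\<lambda>_. B"]
      inner outer by simp
qed

lemma has_sum_sum_fin:
  fixes f :: "'i \<Rightarrow> 'a \<Rightarrow> real"
  assumes "finite I" "\<And>i. i \<in> I \<Longrightarrow> (f i has_sum s i) A"
  shows "((\<lambda>y. \<Sum>i\<in>I. f i y) has_sum (\<Sum>i\<in>I. s i)) A"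
  using assms
proof (induction I rule: finite_induct)
  case empty then show ?case by simp
next
  case (insert j I)
  then show ?case by (simp add: has_sum_add)
qed

lemma has_sum_image_zero:
  fixes g :: "'a \<Rightarrow> real"
  assumes "inj_on h D" "h ` D \<subseteq> S" "\<And>y. y \<in> S \<Longrightarrow> y \<notin> h ` D \<Longrightarrow> g y = 0"
    and "((\<lambda>d. g (h d)) has_sum s) D"
  shows "(g has_sum s) S"
proof -
  have "(g has_sum s) (h ` D)"
    using has_sum_reindex[OF assms(1), of g s] assms(4) by (simp add: comp_def)
  then show ?thesis
    by (rule has_sum_cong_neutral[THEN iffD1, rotated -1]) (use assms(2,3) in auto)
qed

lemma infsum_split_point:
  fixes f :: "'a \<Rightarrow> real"
  assumes "f summable_on A" "z \<in> A"
  shows "infsum f A = f z + infsum f (A - {z})"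
proof -
  have "f summable_on (A - {z})" using summable_on_subset[OF assms(1)] by blast
  then have "(f has_sum (f z + infsum f (A - {z}))) (insert z (A - {z}))"
    by (intro has_sum_insert) auto
  moreover have "insert z (A - {z}) = A" using assms(2) by auto
  ultimately show ?thesis by (simp add: infsumI)
qed

lemma sum_split2:
  fixes f :: "'a \<Rightarrow> 'b::comm_monoid_add"
  assumes "finite A" "i \<in> A" "k \<in> A" "i \<noteq> k"
  shows "sum f A = f i + f k + sum f (A - {i,k})"
proof -
  have "sum f A = f i + sum f (A - {i})" using assms by (simp add: sum.remove)
  also have "sum f (A - {i}) = f k + sum f (A - {i} - {k})" using assms by (intro sum.remove) auto
  also have "A - {i} - {k} = A - {i,k}" by auto
  finally show ?thesis by (simp add: add.assoc)
qed

lemma prod_split2: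
  fixes f :: "'a \<Rightarrow> 'b::comm_monoid_mult"
  assumes "finite A" "i \<in> A" "k \<in> A" "i \<noteq> k"
  shows "prod f A = f i * f k * prod f (A - {i,k})"
proof -
  have "prod f A = f i * prod f (A - {i})" using assms by (simp add: prod.remove)
  also have "prod f (A - {i}) = f k * prod f (A - {i} - {k})" using assms by (intro prod.remove) auto
  also have "A - {i} - {k} = A - {i,k}" by auto
  finally show ?thesis by (simp add: mult.assoc)
qed

lemma inj_upd2:
  assumes "i \<noteq> k"
  shows "inj_on (\<lambda>(a,b). x(i:=a, k:=b)) D"
proof (rule inj_onI, clarify)
  fix a b a' b' assume eq: "x(i:=a, k:=b) = x(i:=a', k:=b')"
  from fun_cong[OF eq, of i] fun_cong[OF eq, of k] assms show "a = a' \<and> b = b'" by auto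
qed

lemma inj_upd1: "inj_on (\<lambda>a. x(i:=a)) D"
proof (rule inj_onI)
  fix a a' assume eq: "x(i:=a) = x(i:=a')"
  from fun_cong[OF eq, of i] show "a = a'" by auto
qed



theorem mainTheorem1:
  fixes L :: nat and lam :: real
    and E :: "nat \<Rightarrow> qstate set"
    and pp pm q0 :: "nat \<Rightarrow> qstate \<Rightarrow> qstate \<Rightarrow> real"
    and \<pi> :: "nat \<Rightarrow> qstate \<Rightarrow> real"
  assumes L2: "L \<ge> 2"
    and lam_pos: "lam > 0"
    and E_countable: "\<And>i. i < L \<Longrightarrow> countable (E i)"
    and mu_nonneg: "\<And>i z. i < L \<Longrightarrow> z \<in> E i \<Longrightarrow> snd z \<ge> 0"
    and mu_zero: "\<And>i z. i < L \<Longrightarrow> z \<in> E i \<Longrightarrow> fst z = 0 \<Longrightarrow> snd z = 0"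
    and pp_nonneg: "\<And>i z z'. i < L \<Longrightarrow> z \<in> E i \<Longrightarrow> z' \<in> Vp (E i) z \<Longrightarrow> pp i z z' \<ge> 0"
    and pp_sum: "\<And>i z. i < L \<Longrightarrow> z \<in> E i \<Longrightarrow> (pp i z has_sum 1) (Vp (E i) z)"
    and pm_nonneg: "\<And>i z z'. i < L \<Longrightarrow> z \<in> E i \<Longrightarrow> fst z \<ge> 1 \<Longrightarrow> z' \<in> Vm (E i) z \<Longrightarrow> pm i z z' \<ge> 0"
    and pm_sum: "\<And>i z. i < L \<Longrightarrow> z \<in> E i \<Longrightarrow> fst z \<ge> 1 \<Longrightarrow> (pm i z has_sum 1) (Vm (E i) z)"
    and q0_nonneg: "\<And>i z z'. i < L \<Longrightarrow> z \<in> E i \<Longrightarrow> z' \<in> V0 (E i) z \<Longrightarrow> q0 i z z' \<ge> 0"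
    and q0_finite: "\<And>i z. i < L \<Longrightarrow> z \<in> E i \<Longrightarrow> (q0 i z) summable_on (V0 (E i) z)"
    and \<pi>_stat: "\<And>i. i < L \<Longrightarrow> stationary_dist (E i) (iso_rate (E i) (pp i) (pm i) (q0 i) lam) (\<pi> i)"
    and balance1: "\<And>i zi. i < L \<Longrightarrow> zi \<in> E i \<Longrightarrow>
       ((\<lambda>z. snd z * pm i z zi * \<pi> i z) has_sum (lam * \<pi> i zi)) (Vp (E i) zi)"
    and balance2_sum1: "\<And>i zi. i < L \<Longrightarrow> zi \<in> E i \<Longrightarrow>
       (\<lambda>z. lam * pp i z zi * \<pi> i z) summable_on (Vm (E i) zi)"
    and balance2_sum2: "\<And>i zi. i < L \<Longrightarrow> zi \<in> E i \<Longrightarrow>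
       (\<lambda>z. q0 i z zi * \<pi> i z) summable_on (V0 (E i) zi)"
    and balance2: "\<And>i zi. i < L \<Longrightarrow> zi \<in> E i \<Longrightarrow>
       snd zi * \<pi> i zi + (\<Sum>\<^sub>\<infinity>z\<in>V0 (E i) zi. q0 i zi z * \<pi> i zi)
       = (\<Sum>\<^sub>\<infinity>z\<in>Vm (E i) zi. lam * pp i z zi * \<pi> i z)
         + (\<Sum>\<^sub>\<infinity>z\<in>V0 (E i) zi. q0 i z zi * \<pi> i z)"
  shows "\<forall>N::nat.
     (let Z = (\<Sum>\<^sub>\<infinity>x\<in>Omega L E N. \<Prod>i<L. \<pi> i (x i)) in
      Z > 0 \<longrightarrow>
      stationary_dist (Omega L E N) (net_rate L E pp pm q0) (\<lambda>x. (\<Prod>i<L. \<pi> i (x i)) / Z))"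
proof (intro allI)
  fix N :: nat
  define S where "S = Omega L E N"
  define P0 where "P0 = (\<lambda>y::nat\<Rightarrow>qstate. \<Prod>i<L. \<pi> i (y i))"
  define Z where "Z = infsum P0 S"
  define K where "K = (\<lambda>i::nat. Suc i mod L)"
  define q where "q = net_rate L E pp pm q0"
  have Kl: "K i < L" if "i < L" for i using that L2 by (simp add: K_def)
  have Kne: "K i \<noteq> i" "i \<noteq> K i" if "i < L" for i
  proof -
    show "K i \<noteq> i"
    proof (cases "Suc i < L")
      case True then show ?thesis by (simp add: K_def)
    next
      case False then have "Suc i = L" using that by simp
      then show ?thesis using L2 by (simp add: K_def)
    qed
    then show "i \<noteq> K i" by simp
  qed
  have Kinj: "inj_on K {..<L}"
  proof (rule inj_onI)
    fix i j assume i: "i \<in> {..<L}" and j: "j \<in> {..<L}" and eq: "K i = K j"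
    show "i = j"
    proof (cases "Suc i < L"; cases "Suc j < L")
      assume "Suc i < L" "Suc j < L" then show ?thesis using eq by (simp add: K_def)
    next
      assume "Suc i < L" "\<not> Suc j < L"
      moreover then have "Suc j = L" using j by simp
      ultimately show ?thesis using eq by (simp add: K_def)
    next
      assume "\<not> Suc i < L" "Suc j < L"
      moreover then have "Suc i = L" using i by simp
      ultimately show ?thesis using eq by (simp add: K_def)
    next
      assume "\<not> Suc i < L" "\<not> Suc j < L" then show ?thesis using i j by simp
    qed
  qed
  have Kimg: "K ` {..<L} = {..<L}"
  proof
    show "K ` {..<L} \<subseteq> {..<L}" using Kl by auto
    show "{..<L} \<subseteq> K ` {..<L}"
    proof
      fix k assume k: "k \<in> {..<L}"
      show "k \<in> K ` {..<L}"
      proof (cases k)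
        case 0 then have "K (L - 1) = k" using L2 by (simp add: K_def)
        then show ?thesis using L2 by (intro image_eqI[where x="L - 1"]) auto
      next
        case (Suc m) then have "K m = k" using k by (simp add: K_def)
        then show ?thesis using k Suc by (intro image_eqI[where x=m]) auto
      qed
    qed
  qed
  have pi_nonneg: "\<pi> i z \<ge> 0" if "i < L" "z \<in> E i" for i z
    using \<pi>_stat[OF that(1)] that(2) unfolding stationary_dist_def by blast
  have SE: "y i \<in> E i" if "y \<in> S" "i < L" for y i
    using that unfolding S_def Omega_def by (auto simp: PiE_iff)
  have P0_nonneg: "P0 y \<ge> 0" if "y \<in> S" for y
    unfolding P0_def by (rule prod_nonneg) (use that SE pi_nonneg in blast)
  have q_eq: "q y z = (\<Sum>i<L. if 1 \<le> fst (y i)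
                \<and> z = y(i := z i, K i := z (K i))
                \<and> z i \<in> Vm (E i) (y i)
                \<and> z (K i) \<in> Vp (E (K i)) (y (K i))
             then snd (y i) * pm i (y i) (z i)
                  * pp (K i) (y (K i)) (z (K i))
             else 0)
   + (\<Sum>i<L. if z = y(i := z i) \<and> z i \<in> V0 (E i) (y i)
             then q0 i (y i) (z i) else 0)" for y z
    unfolding q_def net_rate_def K_def ..
  have main: "stationary_dist S q (\<lambda>y. P0 y / Z)" if Zpos: "Z > 0"
  proof -
    have P0sum: "(P0 has_sum Z) S"
    proof -
      have "P0 summable_on S" using Zpos infsum_not_exists unfolding Z_def by force
      then show ?thesis unfolding Z_def by simp
    qed
    have Psum: "((\<lambda>y. P0 y / Z) has_sum 1) S"
    proof -
      have "((\<lambda>y. P0 y * inverse Z) has_sum (Z * inverse Z)) S"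
        by (rule has_sum_cmult_left[OF P0sum])
      then show ?thesis using Zpos by (simp add: divide_inverse)
    qed
    have balx: "q x summable_on (S - {x}) \<and>
        ((\<lambda>y. P0 y / Z * q y x) has_sum (P0 x / Z * infsum (q x) (S - {x}))) (S - {x})"
      if xS: "x \<in> S" for x
    proof -
      have xE: "x i \<in> E i" if "i < L" for i using SE[OF xS that] .
      have xPi: "x \<in> PiE {..<L} E" and xsum: "(\<Sum>i<L. fst (x i)) = N"
        using xS unfolding S_def Omega_def by auto
      have memS2: "x(i:=a, K i:=b) \<in> S"
        if i: "i < L" and a: "a \<in> E i" and b: "b \<in> E (K i)"
          and ab: "fst a + fst b = fst (x i) + fst (x (K i))" for i a b
      proof -
        have "x(i:=a, K i:=b) \<in> PiE {..<L} E"
          using xPi i a b Kl[OF i] by (auto simp: PiE_iff extensional_def)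
        moreover have "(\<Sum>m<L. fst ((x(i:=a, K i:=b)) m)) = N"
        proof -
          have "(\<Sum>m<L. fst ((x(i:=a, K i:=b)) m)) = fst a + fst b +
              (\<Sum>m\<in>{..<L} - {i, K i}. fst ((x(i:=a, K i:=b)) m))"
            using sum_split2[of "{..<L}" i "K i" "\<lambda>m. fst ((x(i:=a, K i:=b)) m)"] i Kl[OF i] Kne[OF i]
            by simp
          also have "(\<Sum>m\<in>{..<L} - {i, K i}. fst ((x(i:=a, K i:=b)) m)) = (\<Sum>m\<in>{..<L} - {i, K i}. fst (x m))"
            by (rule sum.cong) auto
          also have "fst a + fst b + (\<Sum>m\<in>{..<L} - {i, K i}. fst (x m)) = (\<Sum>m<L. fst (x m))"
            using sum_split2[of "{..<L}" i "K i" "\<lambda>m. fst (x m)"] i Kl[OF i] Kne[OF i] ab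
            by simp
          finally show ?thesis using xsum by (rule trans)
        qed
        ultimately show ?thesis unfolding S_def Omega_def by simp
      qed
      have memS1: "x(i:=a) \<in> S"
        if i: "i < L" and a: "a \<in> E i" and ab: "fst a = fst (x i)" for i a
      proof -
        have "x(i:=a) \<in> PiE {..<L} E"
          using xPi i a by (auto simp: PiE_iff extensional_def)
        moreover have "(\<Sum>m<L. fst ((x(i:=a)) m)) = N"
        proof -
          have "(\<Sum>m<L. fst ((x(i:=a)) m)) = fst a + (\<Sum>m\<in>{..<L} - {i}. fst ((x(i:=a)) m))"
            using i by (simp add: sum.remove)
          also have "(\<Sum>m\<in>{..<L} - {i}. fst ((x(i:=a)) m)) = (\<Sum>m\<in>{..<L} - {i}. fst (x m))"
            by (rule sum.cong) auto
          also have "fst a + (\<Sum>m\<in>{..<L} - {i}. fst (x m)) = (\<Sum>m<L. fst (x m))"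
            using i ab by (simp add: sum.remove)
          finally show ?thesis using xsum by (rule trans)
        qed
        ultimately show ?thesis unfolding S_def Omega_def by simp
      qed
      define R where "R i = (\<Prod>m\<in>{..<L} - {i, K i}. \<pi> m (x m))" for i
      define R1 where "R1 i = (\<Prod>m\<in>{..<L} - {i}. \<pi> m (x m))" for i
      have P0_2: "P0 (x(i:=a, K i:=b)) = \<pi> i a * \<pi> (K i) b * R i" if i: "i < L" for i a b
      proof -
        have "P0 (x(i:=a, K i:=b)) = \<pi> i a * \<pi> (K i) b *
              (\<Prod>m\<in>{..<L} - {i, K i}. \<pi> m ((x(i:=a, K i:=b)) m))"
          unfolding P0_def
          using prod_split2[of "{..<L}" i "K i" "\<lambda>m. \<pi> m ((x(i:=a, K i:=b)) m)"] i Kl[OF i] Kne[OF i]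
          by simp
        also have "(\<Prod>m\<in>{..<L} - {i, K i}. \<pi> m ((x(i:=a, K i:=b)) m)) = R i"
          unfolding R_def by (rule prod.cong) auto
        finally show ?thesis .
      qed
      have P0_1: "P0 (x(i:=a)) = \<pi> i a * R1 i" if i: "i < L" for i a
      proof -
        have "P0 (x(i:=a)) = \<pi> i a * (\<Prod>m\<in>{..<L} - {i}. \<pi> m ((x(i:=a)) m))"
          unfolding P0_def using i by (simp add: prod.remove)
        also have "(\<Prod>m\<in>{..<L} - {i}. \<pi> m ((x(i:=a)) m)) = R1 i"
          unfolding R1_def by (rule prod.cong) auto
        finally show ?thesis .
      qed
      have P0x: "P0 x = \<pi> k (x k) * R1 k" if "k < L" for k
        using P0_1[OF that, of "x k"] by simp
      have Rrel: "R1 (K i) = \<pi> i (x i) * R i" if i: "i < L" for i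
      proof -
        have "R1 (K i) = \<pi> i (x i) * (\<Prod>m\<in>{..<L} - {K i} - {i}. \<pi> m (x m))"
          unfolding R1_def using i Kne[OF i] by (intro prod.remove) auto
        also have "{..<L} - {K i} - {i} = {..<L} - {i, K i}" by auto
        finally show ?thesis unfolding R_def .
      qed
      define A where "A k = infsum (\<lambda>b. pp k b (x k) * \<pi> k b) (Vm (E k) (x k))" for k
      define B where "B k = infsum (\<lambda>a. q0 k a (x k) * \<pi> k a) (V0 (E k) (x k) - {x k})" for k
      define C where "C k = infsum (q0 k (x k)) (V0 (E k) (x k) - {x k})" for k
      have A_sum: "((\<lambda>b. pp k b (x k) * \<pi> k b) has_sum A k) (Vm (E k) (x k))" if k: "k < L" for k
      proof -
        have "(\<lambda>b. lam * (pp k b (x k) * \<pi> k b)) summable_on (Vm (E k) (x k))"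
          using balance2_sum1[OF k xE[OF k]] by (simp add: mult.assoc)
        then have "(\<lambda>b. pp k b (x k) * \<pi> k b) summable_on (Vm (E k) (x k))"
          using summable_on_cmult_right' lam_pos by (metis less_irrefl)
        then show ?thesis unfolding A_def by simp
      qed
      have B_sum: "((\<lambda>a. q0 k a (x k) * \<pi> k a) has_sum B k) (V0 (E k) (x k) - {x k})" if k: "k < L" for k
        using summable_on_subset[OF balance2_sum2[OF k xE[OF k]], of "V0 (E k) (x k) - {x k}"]
        unfolding B_def by auto
      have C_sum: "(q0 k (x k) has_sum C k) (V0 (E k) (x k) - {x k})" if k: "k < L" for k
        using summable_on_subset[OF q0_finite[OF k xE[OF k]], of "V0 (E k) (x k) - {x k}"]
        unfolding C_def by auto
      have bal: "lam * A k + B k = \<pi> k (x k) * (snd (x k) + C k)" if k: "k < L" for k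
      proof -
        have xV0: "x k \<in> V0 (E k) (x k)" using xE[OF k] by (simp add: V0_def)
        have e1: "(\<Sum>\<^sub>\<infinity>z\<in>V0 (E k) (x k). q0 k (x k) z * \<pi> k (x k))
             = (q0 k (x k) (x k) + C k) * \<pi> k (x k)"
          using infsum_cmult_left'[of "q0 k (x k)" "\<pi> k (x k)" "V0 (E k) (x k)"]
            infsum_split_point[OF q0_finite[OF k xE[OF k]] xV0] unfolding C_def by simp
        have e2: "(\<Sum>\<^sub>\<infinity>z\<in>Vm (E k) (x k). lam * pp k z (x k) * \<pi> k z) = lam * A k"
          using infsum_cmult_right'[of lam "\<lambda>b. pp k b (x k) * \<pi> k b" "Vm (E k) (x k)"]
          unfolding A_def by (simp add: mult.assoc)
        have e3: "(\<Sum>\<^sub>\<infinity>z\<in>V0 (E k) (x k). q0 k z (x k) * \<pi> k z)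
             = q0 k (x k) (x k) * \<pi> k (x k) + B k"
          using infsum_split_point[OF balance2_sum2[OF k xE[OF k]] xV0] unfolding B_def by simp
        show ?thesis using balance2[OF k xE[OF k]] e1 e2 e3 by (simp add: algebra_simps)
      qed
      have out_T: "((\<lambda>y. if 1 \<le> fst (x i) \<and> y = x(i := y i, K i := y (K i))
                \<and> y i \<in> Vm (E i) (x i) \<and> y (K i) \<in> Vp (E (K i)) (x (K i))
             then snd (x i) * pm i (x i) (y i) * pp (K i) (x (K i)) (y (K i)) else 0)
           has_sum snd (x i)) (S - {x})" if i: "i < L" for i
      proof (cases "1 \<le> fst (x i)")
        case False
        then have "snd (x i) = 0" using mu_zero[OF i xE[OF i]] by simp
        then show ?thesis using False by simp
      next
        case True
        note Ki = Kl[OF i] Kne[OF i]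
        define D where "D = Vm (E i) (x i) \<times> Vp (E (K i)) (x (K i))"
        show ?thesis
        proof (rule has_sum_image_zero[where h="\<lambda>(a,b). x(i:=a, K i:=b)" and D=D])
          show "inj_on (\<lambda>(a,b). x(i:=a, K i:=b)) D" by (rule inj_upd2[OF Ki(3)])
          show "(\<lambda>(a,b). x(i:=a, K i:=b)) ` D \<subseteq> S - {x}"
          proof
            fix y assume "y \<in> (\<lambda>(a,b). x(i:=a, K i:=b)) ` D"
            then obtain a b where ab: "(a,b) \<in> D" and yab: "y = x(i:=a, K i:=b)" by auto
            then have "x(i:=a, K i:=b) \<in> S" using i
              by (intro memS2) (auto simp: D_def Vm_def Vp_def)
            moreover have "x(i:=a, K i:=b) \<noteq> x"
            proof
              assume "x(i:=a, K i:=b) = x"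
              from fun_cong[OF this, of i] Ki ab show False by (auto simp: D_def Vm_def)
            qed
            ultimately show "y \<in> S - {x}" using yab by simp
          qed
          show "(if 1 \<le> fst (x i) \<and> y = x(i := y i, K i := y (K i))
                \<and> y i \<in> Vm (E i) (x i) \<and> y (K i) \<in> Vp (E (K i)) (x (K i))
             then snd (x i) * pm i (x i) (y i) * pp (K i) (x (K i)) (y (K i)) else 0) = 0"
            if "y \<in> S - {x}" "y \<notin> (\<lambda>(a,b). x(i:=a, K i:=b)) ` D" for y
          proof (rule ccontr)
            assume "\<not> ?thesis"
            then have c: "y = x(i := y i, K i := y (K i))" "y i \<in> Vm (E i) (x i)"
                "y (K i) \<in> Vp (E (K i)) (x (K i))" by (auto split: if_splits)
            then have "y \<in> (\<lambda>(a,b). x(i:=a, K i:=b)) ` D"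
              by (intro image_eqI[where x="(y i, y (K i))"]) (auto simp: D_def)
            then show False using that by blast
          qed
          have "((\<lambda>(a,b). pm i (x i) a * pp (K i) (x (K i)) b) has_sum (1 * 1)) D"
            unfolding D_def
            by (rule has_sum_times_nonneg[OF pm_sum[OF i xE[OF i] True] pp_sum[OF Ki(1) xE[OF Ki(1)]]])
              (auto intro: pm_nonneg[OF i xE[OF i] True] pp_nonneg[OF Ki(1) xE[OF Ki(1)]])
          then have "((\<lambda>d. snd (x i) * (case d of (a,b) \<Rightarrow> pm i (x i) a * pp (K i) (x (K i)) b)) has_sum (snd (x i))) D"
            using has_sum_cmult_right by fastforce
          then show "((\<lambda>d. (\<lambda>y. if 1 \<le> fst (x i) \<and> y = x(i := y i, K i := y (K i))
                \<and> y i \<in> Vm (E i) (x i) \<and> y (K i) \<in> Vp (E (K i)) (x (K i))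
             then snd (x i) * pm i (x i) (y i) * pp (K i) (x (K i)) (y (K i)) else 0)
                 ((\<lambda>(a,b). x(i:=a, K i:=b)) d)) has_sum snd (x i)) D"
            by (rule has_sum_cong[THEN iffD1, rotated]) (use True Ki in \<open>auto simp: D_def mult.assoc\<close>)
        qed
      qed
      have out_I: "((\<lambda>y. if y = x(i := y i) \<and> y i \<in> V0 (E i) (x i) then q0 i (x i) (y i) else 0)
           has_sum C i) (S - {x})" if i: "i < L" for i
      proof (rule has_sum_image_zero[where h="\<lambda>a. x(i:=a)" and D="V0 (E i) (x i) - {x i}"])
        show "inj_on (\<lambda>a. x(i:=a)) (V0 (E i) (x i) - {x i})" by (rule inj_upd1)
        show "(\<lambda>a. x(i:=a)) ` (V0 (E i) (x i) - {x i}) \<subseteq> S - {x}"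
        proof
          fix y assume "y \<in> (\<lambda>a. x(i:=a)) ` (V0 (E i) (x i) - {x i})"
          then obtain a where a: "a \<in> V0 (E i) (x i)" "a \<noteq> x i" and ya: "y = x(i:=a)" by auto
          then have "x(i:=a) \<in> S" using i by (intro memS1) (auto simp: V0_def)
          moreover have "x(i:=a) \<noteq> x"
          proof
            assume "x(i:=a) = x"
            from fun_cong[OF this, of i] a show False by auto
          qed
          ultimately show "y \<in> S - {x}" using ya by simp
        qed
        show "(if y = x(i := y i) \<and> y i \<in> V0 (E i) (x i) then q0 i (x i) (y i) else 0) = 0"
          if "y \<in> S - {x}" "y \<notin> (\<lambda>a. x(i:=a)) ` (V0 (E i) (x i) - {x i})" for y
        proof (rule ccontr)
          assume "\<not> ?thesis"
          then have c: "y = x(i := y i)" "y i \<in> V0 (E i) (x i)" by (auto split: if_splits)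
          moreover have "y i \<noteq> x i" using c(1) that(1) by (metis DiffE fun_upd_triv singletonI)
          ultimately have "y \<in> (\<lambda>a. x(i:=a)) ` (V0 (E i) (x i) - {x i})"
            by (intro image_eqI[where x="y i"]) auto
          then show False using that by blast
        qed
        show "((\<lambda>d. (\<lambda>y. if y = x(i := y i) \<and> y i \<in> V0 (E i) (x i) then q0 i (x i) (y i) else 0)
               ((\<lambda>a. x(i:=a)) d)) has_sum C i) (V0 (E i) (x i) - {x i})"
          by (rule has_sum_cong[THEN iffD1, rotated, OF C_sum[OF i]]) auto
      qed
      have out_sum: "(q x has_sum ((\<Sum>i<L. snd (x i)) + (\<Sum>i<L. C i))) (S - {x})"
        unfolding q_eq
        by (intro has_sum_add has_sum_sum_fin finite_lessThan out_T out_I; simp)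
      have in_T: "((\<lambda>y. P0 y / Z * (if 1 \<le> fst (y i) \<and> x = y(i := x i, K i := x (K i))
                \<and> x i \<in> Vm (E i) (y i) \<and> x (K i) \<in> Vp (E (K i)) (y (K i))
             then snd (y i) * pm i (y i) (x i) * pp (K i) (y (K i)) (x (K i)) else 0))
           has_sum (R i / Z * (lam * \<pi> i (x i) * A (K i)))) (S - {x})" if i: "i < L" for i
      proof -
        note Ki = Kl[OF i] Kne[OF i]
        define D where "D = Vp (E i) (x i) \<times> Vm (E (K i)) (x (K i))"
        show ?thesis
        proof (rule has_sum_image_zero[where h="\<lambda>(a,b). x(i:=a, K i:=b)" and D=D])
          show "inj_on (\<lambda>(a,b). x(i:=a, K i:=b)) D" by (rule inj_upd2[OF Ki(3)])
          show "(\<lambda>(a,b). x(i:=a, K i:=b)) ` D \<subseteq> S - {x}"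
          proof
            fix y assume "y \<in> (\<lambda>(a,b). x(i:=a, K i:=b)) ` D"
            then obtain a b where ab: "(a,b) \<in> D" and yab: "y = x(i:=a, K i:=b)" by auto
            then have "x(i:=a, K i:=b) \<in> S" using i
              by (intro memS2) (auto simp: D_def Vm_def Vp_def)
            moreover have "x(i:=a, K i:=b) \<noteq> x"
            proof
              assume "x(i:=a, K i:=b) = x"
              from fun_cong[OF this, of i] Ki ab show False by (auto simp: D_def Vp_def)
            qed
            ultimately show "y \<in> S - {x}" using yab by simp
          qed
          show "P0 y / Z * (if 1 \<le> fst (y i) \<and> x = y(i := x i, K i := x (K i))
                \<and> x i \<in> Vm (E i) (y i) \<and> x (K i) \<in> Vp (E (K i)) (y (K i))
             then snd (y i) * pm i (y i) (x i) * pp (K i) (y (K i)) (x (K i)) else 0) = 0"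
            if y: "y \<in> S - {x}" "y \<notin> (\<lambda>(a,b). x(i:=a, K i:=b)) ` D" for y
          proof (rule ccontr)
            assume "\<not> ?thesis"
            then have c: "x = y(i := x i, K i := x (K i))" "x i \<in> Vm (E i) (y i)"
                "x (K i) \<in> Vp (E (K i)) (y (K i))" by (auto split: if_splits)
            have yeq: "y = x(i := y i, K i := y (K i))"
            proof
              fix m show "y m = (x(i := y i, K i := y (K i))) m"
                using fun_cong[OF c(1), of m] by auto
            qed
            have "y i \<in> E i" "y (K i) \<in> E (K i)" using SE y(1) i Ki by auto
            then have "(y i, y (K i)) \<in> D" using c(2,3) by (auto simp: D_def Vm_def Vp_def)
            then have "y \<in> (\<lambda>(a,b). x(i:=a, K i:=b)) ` D"
              by (subst yeq, intro image_eqI[where x="(y i, y (K i))"]) auto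
            then show False using y by blast
          qed
          have "((\<lambda>(a,b). (snd a * pm i a (x i) * \<pi> i a) * (pp (K i) b (x (K i)) * \<pi> (K i) b))
                   has_sum (lam * \<pi> i (x i) * A (K i))) D"
            unfolding D_def
          proof (rule has_sum_times_nonneg[OF balance1[OF i xE[OF i]] A_sum[OF Ki(1)]])
            fix a assume a: "a \<in> Vp (E i) (x i)"
            then have aE: "a \<in> E i" and fa: "fst a = fst (x i) + 1" by (auto simp: Vp_def)
            have "pm i a (x i) \<ge> 0" using pm_nonneg[OF i aE] fa xE[OF i] by (auto simp: Vm_def)
            then show "snd a * pm i a (x i) * \<pi> i a \<ge> 0"
              using mu_nonneg[OF i aE] pi_nonneg[OF i aE] by simp
          next
            fix b assume b: "b \<in> Vm (E (K i)) (x (K i))"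
            then have bE: "b \<in> E (K i)" and fb: "fst b + 1 = fst (x (K i))" by (auto simp: Vm_def)
            have "pp (K i) b (x (K i)) \<ge> 0" using pp_nonneg[OF Ki(1) bE] fb xE[OF Ki(1)] by (auto simp: Vp_def)
            then show "pp (K i) b (x (K i)) * \<pi> (K i) b \<ge> 0"
              using pi_nonneg[OF Ki(1) bE] by simp
          qed
          then have "((\<lambda>d. R i / Z * (case d of (a,b) \<Rightarrow> (snd a * pm i a (x i) * \<pi> i a) * (pp (K i) b (x (K i)) * \<pi> (K i) b)))
                   has_sum (R i / Z * (lam * \<pi> i (x i) * A (K i)))) D"
            using has_sum_cmult_right by fastforce
          then show "((\<lambda>d. (\<lambda>y. P0 y / Z * (if 1 \<le> fst (y i) \<and> x = y(i := x i, K i := x (K i))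
                \<and> x i \<in> Vm (E i) (y i) \<and> x (K i) \<in> Vp (E (K i)) (y (K i))
             then snd (y i) * pm i (y i) (x i) * pp (K i) (y (K i)) (x (K i)) else 0))
                 ((\<lambda>(a,b). x(i:=a, K i:=b)) d)) has_sum (R i / Z * (lam * \<pi> i (x i) * A (K i)))) D"
          proof (rule has_sum_cong[THEN iffD1, rotated], clarify)
            fix a b assume ab: "(a,b) \<in> D"
            then have fa: "fst a = fst (x i) + 1" and fb: "fst b + 1 = fst (x (K i))"
              and aE: "a \<in> E i" and bE: "b \<in> E (K i)" by (auto simp: D_def Vp_def Vm_def)
            have upd: "x = (x(i:=a, K i:=b))(i := x i, K i := x (K i))" by (rule ext) auto
            have cond: "1 \<le> fst a" "x i \<in> Vm (E i) a" "x (K i) \<in> Vp (E (K i)) b"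
              using fa fb xE[OF i] xE[OF Ki(1)] by (auto simp: Vm_def Vp_def)
            show "R i / Z * (snd a * pm i a (x i) * \<pi> i a * (pp (K i) b (x (K i)) * \<pi> (K i) b)) =
              P0 (x(i:=a, K i:=b)) / Z * (if 1 \<le> fst ((x(i:=a, K i:=b)) i) \<and> x = (x(i:=a, K i:=b))(i := x i, K i := x (K i))
                \<and> x i \<in> Vm (E i) ((x(i:=a, K i:=b)) i) \<and> x (K i) \<in> Vp (E (K i)) ((x(i:=a, K i:=b)) (K i))
             then snd ((x(i:=a, K i:=b)) i) * pm i ((x(i:=a, K i:=b)) i) (x i) * pp (K i) ((x(i:=a, K i:=b)) (K i)) (x (K i)) else 0)"
              using Ki cond upd by (simp add: P0_2[OF i] algebra_simps)
          qed
        qed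
      qed
      have in_I: "((\<lambda>y. P0 y / Z * (if x = y(i := x i) \<and> x i \<in> V0 (E i) (y i) then q0 i (y i) (x i) else 0))
           has_sum (R1 i / Z * B i)) (S - {x})" if i: "i < L" for i
      proof (rule has_sum_image_zero[where h="\<lambda>a. x(i:=a)" and D="V0 (E i) (x i) - {x i}"])
        show "inj_on (\<lambda>a. x(i:=a)) (V0 (E i) (x i) - {x i})" by (rule inj_upd1)
        show "(\<lambda>a. x(i:=a)) ` (V0 (E i) (x i) - {x i}) \<subseteq> S - {x}"
        proof
          fix y assume "y \<in> (\<lambda>a. x(i:=a)) ` (V0 (E i) (x i) - {x i})"
          then obtain a where a: "a \<in> V0 (E i) (x i)" "a \<noteq> x i" and ya: "y = x(i:=a)" by auto
          then have "x(i:=a) \<in> S" using i by (intro memS1) (auto simp: V0_def)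
          moreover have "x(i:=a) \<noteq> x"
          proof
            assume "x(i:=a) = x"
            from fun_cong[OF this, of i] a show False by auto
          qed
          ultimately show "y \<in> S - {x}" using ya by simp
        qed
        show "P0 y / Z * (if x = y(i := x i) \<and> x i \<in> V0 (E i) (y i) then q0 i (y i) (x i) else 0) = 0"
          if y: "y \<in> S - {x}" "y \<notin> (\<lambda>a. x(i:=a)) ` (V0 (E i) (x i) - {x i})" for y
        proof (rule ccontr)
          assume "\<not> ?thesis"
          then have c: "x = y(i := x i)" "x i \<in> V0 (E i) (y i)" by (auto split: if_splits)
          have yeq: "y = x(i := y i)"
          proof
            fix m show "y m = (x(i := y i)) m" using fun_cong[OF c(1), of m] by auto
          qed
          have "y i \<in> E i" using SE y(1) i by auto
          then have "y i \<in> V0 (E i) (x i)" using c(2) by (auto simp: V0_def)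
          moreover have "y i \<noteq> x i" using yeq y(1) by (metis DiffE fun_upd_triv singletonI)
          ultimately have "y \<in> (\<lambda>a. x(i:=a)) ` (V0 (E i) (x i) - {x i})"
            by (subst yeq, intro image_eqI[where x="y i"]) auto
          then show False using y by blast
        qed
        have "((\<lambda>a. R1 i / Z * (q0 i a (x i) * \<pi> i a)) has_sum (R1 i / Z * B i)) (V0 (E i) (x i) - {x i})"
          by (rule has_sum_cmult_right[OF B_sum[OF i]])
        then show "((\<lambda>d. (\<lambda>y. P0 y / Z * (if x = y(i := x i) \<and> x i \<in> V0 (E i) (y i) then q0 i (y i) (x i) else 0))
               ((\<lambda>a. x(i:=a)) d)) has_sum (R1 i / Z * B i)) (V0 (E i) (x i) - {x i})"
        proof (rule has_sum_cong[THEN iffD1, rotated])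
          fix a assume a: "a \<in> V0 (E i) (x i) - {x i}"
          then have "x i \<in> V0 (E i) a" using xE[OF i] by (auto simp: V0_def)
          then show "R1 i / Z * (q0 i a (x i) * \<pi> i a) =
            P0 (x(i:=a)) / Z * (if x = (x(i:=a))(i := x i) \<and> x i \<in> V0 (E i) ((x(i:=a)) i) then q0 i ((x(i:=a)) i) (x i) else 0)"
            by (simp add: P0_1[OF i] algebra_simps)
        qed
      qed
      have in_sum: "((\<lambda>y. P0 y / Z * q y x) has_sum
          ((\<Sum>i<L. R i / Z * (lam * \<pi> i (x i) * A (K i))) + (\<Sum>i<L. R1 i / Z * B i))) (S - {x})"
        unfolding q_eq distrib_left sum_distrib_left
        by (intro has_sum_add has_sum_sum_fin finite_lessThan in_T in_I; simp)
      have eq: "(\<Sum>i<L. R i / Z * (lam * \<pi> i (x i) * A (K i))) + (\<Sum>i<L. R1 i / Z * B i)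
          = P0 x / Z * ((\<Sum>i<L. snd (x i)) + (\<Sum>i<L. C i))"
      proof -
        have "(\<Sum>i<L. R i / Z * (lam * \<pi> i (x i) * A (K i))) = (\<Sum>i<L. (\<lambda>k. R1 k / Z * (lam * A k)) (K i))"
          by (rule sum.cong) (auto simp: Rrel)
        also have "\<dots> = (\<Sum>k\<in>K ` {..<L}. R1 k / Z * (lam * A k))"
          using sum.reindex[OF Kinj, of "\<lambda>k. R1 k / Z * (lam * A k)"] by simp
        also have "\<dots> = (\<Sum>k<L. R1 k / Z * (lam * A k))" using Kimg by simp
        finally have s1: "(\<Sum>i<L. R i / Z * (lam * \<pi> i (x i) * A (K i))) = (\<Sum>k<L. R1 k / Z * (lam * A k))" .
        have "(\<Sum>k<L. R1 k / Z * (lam * A k)) + (\<Sum>i<L. R1 i / Z * B i)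
            = (\<Sum>k<L. R1 k / Z * (lam * A k + B k))"
          by (simp add: sum.distrib[symmetric] distrib_left)
        also have "\<dots> = (\<Sum>k<L. P0 x / Z * (snd (x k) + C k))"
          by (rule sum.cong) (auto simp: bal P0x)
        also have "\<dots> = P0 x / Z * ((\<Sum>i<L. snd (x i)) + (\<Sum>i<L. C i))"
          by (simp only: sum.distrib[symmetric] sum_distrib_left)
        finally show ?thesis using s1 by simp
      qed
      show ?thesis
        using in_sum out_sum eq by (auto simp: infsumI dest: has_sum_imp_summable)
    qed
    show ?thesis
      unfolding stationary_dist_def
      using Psum balx P0_nonneg Zpos by auto
  qed
  show "let Z = (\<Sum>\<^sub>\<infinity>x\<in>Omega L E N. \<Prod>i<L. \<pi> i (x i)) in
      Z > 0 \<longrightarrow>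
      stationary_dist (Omega L E N) (net_rate L E pp pm q0) (\<lambda>x. (\<Prod>i<L. \<pi> i (x i)) / Z)"
    using main unfolding Let_def S_def P0_def Z_def q_def by simp
qed


end
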